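(* Let $n\geq 3$. For all positive integers $i,j,r,s,t$, $$\frac{A_{i+j}}{A_s}\neq\frac{A_i}{A_t}+\frac{A_j}{A_r}.$$
   Context: The integers $A_i$ are defined by $A_0=0$, $A_1=1$, $A_{i+2}=nA_{i+1}-A_i$ for $i\geq0$. *)

theory Defs
  imports Main "HOL.Rat"
begin

fun A :: "int \<Rightarrow> nat \<Rightarrow> int" where
  "A n 0 = 0"
| "A n (Suc 0) = 1"
| "A n (Suc (Suc i)) = n * A n (Suc i) - A n i"

end

theory Submission
  imports Defs
begin

lemma A_basic:
  assumes "n \<ge> 3"
  shows "0 \<le> A n k \<and> 2 * A n k < A n (Suc k)"
proof (induction k)
  case 0 then show ?case by simp
next
  case (Suc k)
  then have h1: "0 \<le> A n k" and h2: "2 * A n k < A n (Suc k)" by auto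
  have "3 * A n (Suc k) \<le> n * A n (Suc k)"
    using assms h1 h2 by (intro mult_right_mono) auto
  moreover have "A n (Suc (Suc k)) = n * A n (Suc k) - A n k" by simp
  ultimately show ?case using h1 h2 by linarith
qed

lemma A_nonneg: "n \<ge> 3 \<Longrightarrow> 0 \<le> A n k" using A_basic by blast
lemma A_double: "n \<ge> 3 \<Longrightarrow> 2 * A n k < A n (Suc k)" using A_basic by blast

lemma A_smono: assumes "n \<ge> 3" "k < m" shows "A n k < A n m"
  using assms(2)
proof (induction m)
  case 0 then show ?case by simp
next
  case (Suc m)
  have "A n m < A n (Suc m)" using A_double[OF assms(1), of m] A_nonneg[OF assms(1), of m] by linarith
  then show ?case using Suc by (cases "k = m") auto
qed

lemma A_mono: assumes "n \<ge> 3" "k \<le> m" shows "A n k \<le> A n m"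
  using A_smono[OF assms(1)] assms(2) by (cases "k = m") (auto intro: less_imp_le)

lemma A_pos: assumes "n \<ge> 3" "0 < k" shows "0 < A n k"
  using A_smono[OF assms(1) assms(2)] by simp

lemma A_five: assumes "n \<ge> 3" "1 \<le> q" shows "5 * A n q < 2 * A n (Suc q)"
proof (cases q)
  case 0 then show ?thesis using assms by simp
next
  case (Suc q')
  show ?thesis
  proof (cases q')
    case 0 then show ?thesis using Suc assms by simp
  next
    case (Suc q'')
    have p: "0 < A n q" using A_pos assms by auto
    have "3 * A n q \<le> n * A n q" using assms p by (intro mult_right_mono) auto
    moreover have "2 * A n q' < A n q" using A_double[OF assms(1), of q'] \<open>q = Suc q'\<close> by simp
    ultimately show ?thesis using \<open>q = Suc q'\<close> by simp
  qed
qed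

lemma A_F: assumes "n \<ge> 3"
  shows "A n (p + q + 1) = A n (p+1) * A n (q+1) - A n p * A n q \<and>
         A n (p + Suc q + 1) = A n (p+1) * A n (Suc q+1) - A n p * A n (Suc q)"
proof (induction q)
  case 0 show ?case by (simp add: algebra_simps)
next
  case (Suc q)
  have e1: "A n (p + Suc (Suc q) + 1) = n * A n (p + Suc q + 1) - A n (p + q + 1)"
    by (simp add: numeral_eq_Suc)
  have e2: "A n (Suc (Suc q) + 1) = n * A n (Suc q + 1) - A n (q + 1)" by simp
  have e3: "A n (Suc (Suc q)) = n * A n (Suc q) - A n q" by simp
  show ?case using Suc e1 e2 e3 by algebra
qed

lemma A_cas: "A n (x + y) * A n (x + 1) - A n x * A n (x + y + 1) = A n y"
proof (induction x)
  case 0 then show ?case by simp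
next
  case (Suc x)
  have e1: "A n (Suc x + 1) = n * A n (x+1) - A n x" by simp
  have e2: "A n (Suc x + y + 1) = n * A n (x + y + 1) - A n (x+y)"
    by (simp add: numeral_eq_Suc)
  show ?case using Suc e1 e2 by (simp add: algebra_simps)
qed

lemma A_D: "A n (x + y) * A n (x + k) - A n x * A n (x + y + k) = A n y * A n k \<and>
            A n (x + y) * A n (x + Suc k) - A n x * A n (x + y + Suc k) = A n y * A n (Suc k)"
proof (induction k)
  case 0 show ?case using A_cas[of n x y] by simp
next
  case (Suc k)
  have e1: "A n (x + Suc (Suc k)) = n * A n (x + Suc k) - A n (x + k)" by simp
  have e2: "A n (x + y + Suc (Suc k)) = n * A n (x + y + Suc k) - A n (x + y + k)" by simp
  have e3: "A n (Suc (Suc k)) = n * A n (Suc k) - A n k" by simp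
  show ?case using Suc e1 e2 e3 by algebra
qed

lemma A_P1: assumes "n \<ge> 3" "1 \<le> p" "1 \<le> q" shows "A n (p + q - 1) \<le> A n p * A n q"
proof -
  obtain p' q' where pq: "p = p' + 1" "q = q' + 1" using assms by (metis add.commute le_Suc_ex)
  have "A n (p' + q' + 1) = A n (p'+1) * A n (q'+1) - A n p' * A n q'" using A_F[OF assms(1)] by blast
  moreover have "0 \<le> A n p' * A n q'" using A_nonneg[OF assms(1)] by simp
  moreover have "p + q - 1 = p' + q' + 1" using pq by simp
  ultimately show ?thesis using pq by simp
qed

lemma A_P2: assumes "n \<ge> 3" "1 \<le> p" "1 \<le> q" shows "2 * (A n p * A n q) < A n (p + q)"
proof -
  obtain p' where pq: "p = p' + 1" using assms by (metis add.commute le_Suc_ex)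
  have F: "A n (p' + q + 1) = A n (p'+1) * A n (q+1) - A n p' * A n q" using A_F[OF assms(1)] by blast
  have ap: "0 < A n p" using A_pos assms by simp
  have aq: "0 \<le> A n q" using A_nonneg assms by simp
  have "A n p * (5 * A n q) < A n p * (2 * A n (Suc q))"
    using A_five[OF assms(1) assms(3)] ap by (intro mult_strict_left_mono) auto
  moreover have "(2 * A n p') * A n q \<le> A n p * A n q"
    using A_double[OF assms(1), of p'] pq aq by (intro mult_right_mono) auto
  ultimately show ?thesis using F pq by (simp add: algebra_simps)
qed

lemma A_Lp: assumes "n \<ge> 3" "1 \<le> a" "1 \<le> b" "1 \<le> c" "1 \<le> d" "a + b < c + d"
  shows "A n a * A n b < A n c * A n d"
proof -
  have "2 * (A n a * A n b) < A n (a + b)" using A_P2 assms by simp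
  moreover have "0 \<le> A n a * A n b" using A_nonneg assms by simp
  moreover have "A n (a + b) \<le> A n (c + d - 1)" using A_mono assms by simp
  moreover have "A n (c + d - 1) \<le> A n c * A n d" using A_P1 assms by simp
  ultimately show ?thesis by linarith
qed

lemma A_eqcase:
  assumes n: "n \<ge> 3" and pos: "0 < i" "0 < j" "0 < r" "0 < t"
    and E: "A n (i + j) * A n t * A n r = A n (j + t) * (A n i * A n r + A n j * A n t)"
  shows False
proof (cases "i \<le> t")
  case True
  then obtain d where td: "t = i + d" using le_Suc_ex by blast
  have D: "A n (i + j) * A n (i + d) - A n i * A n (i + j + d) = A n j * A n d" using A_D by blast
  have jt: "j + t = i + j + d" using td by simp
  have "A n (j + (i + d)) = A n (i + j + d)" by (simp add: ac_simps)
  have "A n j * (A n r * A n d) = A n j * (A n (i + j + d) * A n (i + d))"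
    using E D unfolding td \<open>A n (j + (i + d)) = A n (i + j + d)\<close> by algebra
  then have eq: "A n r * A n d = A n (i + j + d) * A n (i + d)"
    using A_pos[OF n pos(2)] by simp
  show False
  proof (cases "d = 0")
    case True
    then show False using eq A_pos[OF n, of "i + j"] A_pos[OF n, of "i"] pos by simp
  next
    case False
    consider "r + d < (i + j + d) + (i + d)" | "r + d > (i + j + d) + (i + d)" | "r + d = (i + j + d) + (i + d)" by linarith
    then show False
    proof cases
      case 1 then show False using A_Lp[OF n, of r d "i+j+d" "i+d"] eq pos False by simp
    next
      case 2 then show False using A_Lp[OF n, of "i+j+d" "i+d" r d] eq pos False by simp
    next
      case 3
      then have rr: "r = d + i + (i + j)" by simp
      have D2: "A n (d + i) * A n (d + (i + j)) - A n d * A n (d + i + (i + j)) = A n i * A n (i + j)"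
        using A_D by blast
      have "0 < A n i * A n (i + j)" using A_pos[OF n] pos by simp
      moreover have "A n r * A n d = A n d * A n (d + i + (i + j))" using rr by (simp add: mult.commute)
      moreover have "A n (i + j + d) * A n (i + d) = A n (d + i) * A n (d + (i + j))" by (simp add: ac_simps)
      ultimately show False using D2 eq by linarith
    qed
  qed
next
  case False
  then obtain d where id: "i = t + d" using le_Suc_ex by (metis le_add_diff_inverse nat_le_linear)
  have D: "A n (t + d) * A n (t + j) - A n t * A n (t + d + j) = A n d * A n j" using A_D by blast
  have "A n r * A n d * A n j + A n (j + t) * A n j * A n t = 0"
    using E D unfolding id by (simp add: algebra_simps)
  moreover have "0 < A n r * A n d * A n j" using A_pos[OF n] pos False id by simp
  moreover have "0 < A n (j + t) * A n j * A n t" using A_pos[OF n] pos by simp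
  ultimately show False by linarith
qed

theorem lemma4p5:
  fixes n :: int and i j r s t :: nat
  assumes "n \<ge> 3" and "i > 0" and "j > 0" and "r > 0" and "s > 0" and "t > 0"
  shows "(of_int (A n (i + j)) / of_int (A n s) :: rat)
           \<noteq> of_int (A n i) / of_int (A n t) + of_int (A n j) / of_int (A n r)"
proof
  assume h: "(of_int (A n (i + j)) / of_int (A n s) :: rat)
           = of_int (A n i) / of_int (A n t) + of_int (A n j) / of_int (A n r)"
  note n = assms(1)
  have ps: "0 < A n s" "0 < A n t" "0 < A n r" "0 < A n i" "0 < A n j" "0 < A n (i+j)"
    using A_pos[OF n] assms by auto
  have "(of_int (A n (i + j) * A n t * A n r) :: rat) = of_int (A n s * (A n i * A n r + A n j * A n t))"
    using h ps by (simp add: field_simps)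
  then have E: "A n (i + j) * A n t * A n r = A n s * (A n i * A n r + A n j * A n t)"
    using of_int_eq_iff by blast
  consider "s = j + t" | "s = i + r" | "s > j + t" | "s > i + r" | "s < j + t \<and> s < i + r" by linarith
  then show False
  proof cases
    case 1 then show False using A_eqcase[OF n, of i j r t] E assms by simp
  next
    case 2
    have "A n (j + i) * A n r * A n t = A n (i + r) * (A n j * A n t + A n i * A n r)"
      using E 2 by (simp add: ac_simps)
    then show False using A_eqcase[OF n, of j i t r] assms by simp
  next
    case 3
    have "A n (i + j) * A n t < A n s * A n i" using A_Lp[OF n, of "i+j" t s i] assms 3 by simp
    then have "A n (i + j) * A n t * A n r < A n s * A n i * A n r" using ps by simp
    moreover have "0 < A n s * (A n j * A n t)" using ps by simp
    ultimately show False using E by (simp add: algebra_simps)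
  next
    case 4
    have "A n (i + j) * A n r < A n s * A n j" using A_Lp[OF n, of "i+j" r s j] assms 4 by simp
    then have "A n (i + j) * A n r * A n t < A n s * A n j * A n t" using ps by simp
    moreover have "0 < A n s * (A n i * A n r)" using ps by simp
    ultimately show False using E by (simp add: algebra_simps)
  next
    case 5
    have s1: "A n s \<le> A n j * A n t"
    proof -
      have "s \<le> j + t - 1" using 5 by linarith
      then have "A n s \<le> A n (j + t - 1)" using A_mono[OF n] by blast
      moreover have "A n (j + t - 1) \<le> A n j * A n t" using A_P1[OF n, of j t] assms by simp
      ultimately show ?thesis by linarith
    qed
    have s2: "A n s \<le> A n i * A n r"
    proof -
      have "s \<le> i + r - 1" using 5 by linarith
      then have "A n s \<le> A n (i + r - 1)" using A_mono[OF n] by blast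
      moreover have "A n (i + r - 1) \<le> A n i * A n r" using A_P1[OF n, of i r] assms by simp
      ultimately show ?thesis by linarith
    qed
    have "A n s * (A n i * A n r) \<le> (A n j * A n t) * (A n i * A n r)"
      using s1 ps by (intro mult_right_mono) auto
    moreover have "A n s * (A n j * A n t) \<le> (A n i * A n r) * (A n j * A n t)"
      using s2 ps by (intro mult_right_mono) auto
    moreover have "2 * (A n i * A n j) * (A n t * A n r) < A n (i + j) * (A n t * A n r)"
      using A_P2[OF n, of i j] assms ps by (intro mult_strict_right_mono) auto
    ultimately show False using E by (simp add: algebra_simps)
  qed
qed

end
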